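(* Fix a constant $B\ge 1$. An ideal SABT for $n$ keys with total number of accesses $m$ can be built in $O(\min(n\log n, m))$ time, uses $O(n)$ memory, and has depth $O(\log_B m)$.
   Context: A Generic Self-Adjusting Tree (GSAT) with degree function $D$ for a set of integer keys with access counts $ac_i\ge1$ consists of $m=\sum_i ac_i$, an array of $k\le\lceil D(m)\rceil$ representative keys with their access counts, and $k+1$ child subtrees that are GSATs for the keys lying strictly before the first representative, strictly between consecutive representatives, and strictly after the last; every node stores at least one key. $m(T')$ is the total access count of keys in subtree $T'$. A GSAT is ideal if each child $T_j$ of the root satisfies $m(T_j)\le m/(D(m)+1)$ and each child is ideal. An SABT (Self-Adjusting B-Tree) is a GSAT with constant degree function $D(m)=B$. Cost model for construction: given keys sorted with prefix sums of access counts, a node costs $O(B)$ time and memory plus $O(\log n)$ time per representative (each representative chosen by binary search on prefix sums), besides recursive construction of its children. *)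

theory Defs
  imports Complex_Main
begin

text \<open>A (possibly empty) GSAT. Leaf is the empty tree (no node); a Node stores its
  representative keys with their access counts and its k+1 child subtrees.\<close>
datatype gsat = Leaf | Node "(int \<times> nat) list" "gsat list"

fun weight :: "gsat \<Rightarrow> nat" where
  "weight Leaf = 0"
| "weight (Node rs cs) = sum_list (map snd rs) + sum_list (map weight cs)"

fun nkeys :: "gsat \<Rightarrow> nat" where
  "nkeys Leaf = 0"
| "nkeys (Node rs cs) = length rs + sum_list (map nkeys cs)"

fun depth :: "gsat \<Rightarrow> nat" where
  "depth Leaf = 0"
| "depth (Node rs cs) = Suc (foldr max (map depth cs) 0)"

text \<open>The keys of child j are exactly the keys strictly between representatives j-1 and j.\<close>
inductive is_gsat :: "(nat \<Rightarrow> real) \<Rightarrow> (int \<times> nat) list \<Rightarrow> gsat \<Rightarrow> bool" where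
  empty: "is_gsat D [] Leaf"
| node: "\<lbrakk> rs \<noteq> [];
           real (length rs) \<le> real_of_int \<lceil>D (sum_list (map snd ks))\<rceil>;
           length cs = Suc (length rs);
           length parts = Suc (length rs);
           ks = concat (map (\<lambda>(p, r). p @ [r]) (zip parts rs)) @ last parts;
           \<forall>j < length cs. is_gsat D (parts ! j) (cs ! j) \<rbrakk>
         \<Longrightarrow> is_gsat D ks (Node rs cs)"

fun ideal :: "(nat \<Rightarrow> real) \<Rightarrow> gsat \<Rightarrow> bool" where
  "ideal D Leaf = True"
| "ideal D (Node rs cs) =
     list_all (\<lambda>c. real (weight c) \<le> real (weight (Node rs cs)) / (D (weight (Node rs cs)) + 1)
                    \<and> ideal D c) cs"

definition is_sabt :: "nat \<Rightarrow> (int \<times> nat) list \<Rightarrow> gsat \<Rightarrow> bool" where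
  "is_sabt B ks T \<longleftrightarrow> is_gsat (\<lambda>_. real B) ks T"

definition ideal_sabt :: "nat \<Rightarrow> gsat \<Rightarrow> bool" where
  "ideal_sabt B T \<longleftrightarrow> ideal (\<lambda>_. real B) T"

text \<open>Construction cost under the paper's cost model: each node costs O(B) plus
  O(log) per representative (binary search over the prefix sums of the node's key
  range, of size nkeys of the subtree), plus the cost of building the children.\<close>
fun build_time :: "nat \<Rightarrow> gsat \<Rightarrow> real" where
  "build_time B Leaf = 0"
| "build_time B (Node rs cs) =
     real (B + 1) + real (length rs) * (1 + log 2 (real (nkeys (Node rs cs))))
     + sum_list (map (build_time B) cs)"

fun build_mem :: "nat \<Rightarrow> gsat \<Rightarrow> real" where
  "build_mem B Leaf = 0"
| "build_mem B (Node rs cs) = real (B + 1) + sum_list (map (build_mem B) cs)"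

end

theory Submission imports Defs begin

fun good :: "nat \<Rightarrow> gsat \<Rightarrow> bool" where
  "good B Leaf = True"
| "good B (Node rs cs) = (rs \<noteq> [] \<and> length rs \<le> B \<and> (\<forall>r\<in>set rs. 1 \<le> snd r) \<and> list_all (good B) cs)"

lemma real_sum_list: "real (sum_list (map f xs)) = sum_list (map (\<lambda>x. real (f x)) xs)"
  by (induction xs) auto

lemma len_le_sum: "\<forall>r\<in>set rs. 1 \<le> snd r \<Longrightarrow> length rs \<le> sum_list (map snd rs)"
  by (induction rs) auto

lemma nk_le_w: "good B T \<Longrightarrow> nkeys T \<le> weight T"
proof (induction T)
  case Leaf then show ?case by simp
next
  case (Node rs cs)
  have "sum_list (map nkeys cs) \<le> sum_list (map weight cs)"
    using Node by (intro sum_list_mono) (auto simp: list_all_iff)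
  moreover have "length rs \<le> sum_list (map snd rs)" using Node.prems len_le_sum by auto
  ultimately show ?case by simp
qed

lemma nk_pos: "good B T \<Longrightarrow> T \<noteq> Leaf \<Longrightarrow> 1 \<le> nkeys T"
  by (cases T) (auto simp: Suc_le_eq)

lemma mem_bound: "good B T \<Longrightarrow> build_mem B T \<le> real (B+1) * real (nkeys T)"
proof (induction T)
  case Leaf then show ?case by simp
next
  case (Node rs cs)
  have "sum_list (map (build_mem B) cs) \<le> sum_list (map (\<lambda>c. real (B+1) * real (nkeys c)) cs)"
    using Node by (intro sum_list_mono) (auto simp: list_all_iff)
  also have "\<dots> = real (B+1) * real (sum_list (map nkeys cs))"
    by (simp add: sum_list_const_mult real_sum_list)
  finally have 1: "sum_list (map (build_mem B) cs) \<le> real (B+1) * real (sum_list (map nkeys cs))" .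
  have 2: "1 \<le> length rs" using Node.prems by (cases rs) auto
  have "real (B+1) * 1 \<le> real (B+1) * real (length rs)"
    using 2 by (intro mult_left_mono) auto
  with 1 show ?case by (simp add: algebra_simps)
qed

lemma time_nlogn: "good B T \<Longrightarrow> nkeys T \<le> N \<Longrightarrow>
   build_time B T \<le> real (nkeys T) * (real B + 2 + log 2 (real N))"
proof (induction T)
  case Leaf then show ?case by simp
next
  case (Node rs cs)
  define K where "K = real B + 2 + log 2 (real N)"
  have N1: "1 \<le> N" using nk_pos[OF Node.prems(1)] Node.prems(2) by auto
  have logN: "0 \<le> log 2 (real N)" using N1 by simp
  have "sum_list (map (build_time B) cs) \<le> sum_list (map (\<lambda>c. real (nkeys c) * K) cs)"
  proof (intro sum_list_mono)
    fix c assume c: "c \<in> set cs"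
    have "nkeys c \<le> sum_list (map nkeys cs)" using c by (intro member_le_sum_list) auto
    then have "nkeys c \<le> N" using Node.prems(2) by simp
    then show "build_time B c \<le> real (nkeys c) * K" using Node.IH[OF c] Node.prems c
      by (auto simp: list_all_iff K_def)
  qed
  also have "\<dots> = K * real (sum_list (map nkeys cs))"
    by (simp add: sum_list_const_mult real_sum_list mult.commute)
  finally have 1: "sum_list (map (build_time B) cs) \<le> K * real (sum_list (map nkeys cs))" .
  have 2: "1 \<le> length rs" using Node.prems by (cases rs) auto
  have nk1: "1 \<le> nkeys (Node rs cs)" using 2 by simp
  have 3: "log 2 (real (nkeys (Node rs cs))) \<le> log 2 (real N)"
    using nk1 Node.prems(2) by (subst log_le_cancel_iff) auto
  have "real (length rs) * (1 + log 2 (real (nkeys (Node rs cs)))) \<le> real (length rs) * (1 + log 2 (real N))"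
    using 3 by (intro mult_left_mono) auto
  moreover have "real (B+1) \<le> real (length rs) * real (B + 1)"
    using 2 by simp
  moreover have "real (length rs) * real (B + 1) + real (length rs) * (1 + log 2 (real N)) = real (length rs) * K"
    by (simp add: K_def algebra_simps)
  ultimately have X: "real (B + 1) + real (length rs) * (1 + log 2 (real (nkeys (Node rs cs)))) \<le> real (length rs) * K"
    by linarith
  have "build_time B (Node rs cs) \<le> real (length rs) * K + K * real (sum_list (map nkeys cs))"
    using 1 X by simp
  also have "\<dots> = real (nkeys (Node rs cs)) * K" by (simp add: algebra_simps)
  finally show ?case by (simp add: K_def)
qed

lemma foldr_max_le: "(\<forall>x\<in>set xs. real x \<le> L) \<Longrightarrow> 0 \<le> L \<Longrightarrow> real (foldr max xs 0) \<le> L"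
  by (induction xs) (auto simp: max_def)

lemma w_pos: "good B T \<Longrightarrow> T \<noteq> Leaf \<Longrightarrow> 1 \<le> weight T"
  using nk_le_w nk_pos by (meson le_trans)

lemma depth_bound: "B \<ge> 1 \<Longrightarrow> good B T \<Longrightarrow> ideal (\<lambda>_. real B) T \<Longrightarrow> T \<noteq> Leaf \<Longrightarrow>
   real (depth T) \<le> 1 + log (real B + 1) (real (weight T))"
proof (induction T)
  case Leaf then show ?case by simp
next
  case (Node rs cs)
  define w where "w = weight (Node rs cs)"
  have w1: "1 \<le> w" unfolding w_def using w_pos Node.prems by blast
  have lw: "0 \<le> log (real B + 1) (real w)" using w1 Node.prems(1) by simp
  have "real (foldr max (map depth cs) 0) \<le> log (real B + 1) (real w)"
  proof (rule foldr_max_le[OF _ lw], intro ballI)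
    fix x assume "x \<in> set (map depth cs)"
    then obtain c where c: "c \<in> set cs" and xc: "x = depth c" by auto
    show "real x \<le> log (real B + 1) (real w)"
    proof (cases "c = Leaf")
      case True then show ?thesis using lw xc by simp
    next
      case False
      have gc: "good B c" "ideal (\<lambda>_. real B) c" and wc: "real (weight c) \<le> real w / (real B + 1)"
        using Node.prems c by (auto simp: list_all_iff w_def)
      have wc1: "1 \<le> weight c" using w_pos gc False by blast
      have "real (depth c) \<le> 1 + log (real B + 1) (real (weight c))"
        using Node.IH[OF c Node.prems(1) gc False] .
      also have "log (real B + 1) (real (weight c)) \<le> log (real B + 1) (real w / (real B + 1))"
        using wc wc1 Node.prems(1) by (subst log_le_cancel_iff) auto
      also have "log (real B + 1) (real w / (real B + 1)) = log (real B + 1) (real w) - 1"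
        using w1 Node.prems(1) by (subst log_divide) auto
      finally show ?thesis using xc by simp
    qed
  qed
  then show ?case by (simp add: w_def)
qed


lemma log_sqrt: assumes "1 \<le> (x::real)" shows "1 + log 2 x \<le> 4 * sqrt x"
proof -
  have "ln (1/2::real) \<le> 1/2 - 1" by (rule ln_le_minus_one) auto
  then have l2: "1/2 \<le> ln (2::real)" by (simp add: ln_div)
  have sx: "0 < sqrt x" using assms by simp
  have "ln x = 2 * ln (sqrt x)" using assms by (simp add: ln_sqrt)
  also have "\<dots> \<le> 2 * (sqrt x - 1)" using ln_le_minus_one[OF sx] by simp
  finally have a: "ln x \<le> 2 * (sqrt x - 1)" .
  have lx: "0 \<le> ln x" using assms by simp
  have "log 2 x = ln x / ln 2" by (simp add: log_def)
  also have "\<dots> \<le> ln x / (1/2)" using l2 lx by (intro divide_left_mono) auto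
  also have "\<dots> \<le> 4 * (sqrt x - 1)" using a by simp
  finally show ?thesis using sx by simp
qed

lemma sqrt2_ge: "1.4 \<le> sqrt (2::real)"
  by (rule real_le_rsqrt) (simp add: power2_eq_square)

lemma sum_list_diff_real: "sum_list (map (\<lambda>x. (f x::real) - g x) xs) = sum_list (map f xs) - sum_list (map g xs)"
  by (induction xs) auto

lemma time_lin:
  assumes "B \<ge> 1"
  shows "good B T \<Longrightarrow> ideal (\<lambda>_. real B) T \<Longrightarrow>
    build_time B T \<le> 48 * real (5*B+1) * real (weight T) - 5 * real (5*B+1) * sqrt (real (weight T))"
proof (induction T)
  case Leaf then show ?case by simp
next
  case (Node rs cs)
  define K where "K = real (5*B+1)"
  define \<alpha> where "\<alpha> = 48 * K"
  define \<gamma> where "\<gamma> = 5 * K"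
  define w where "w = real (weight (Node rs cs))"
  define R where "R = real (sum_list (map snd rs))"
  define S where "S = real (sum_list (map weight cs))"
  define Q where "Q = sum_list (map (\<lambda>c. sqrt (real (weight c))) cs)"
  have wRS: "w = R + S" by (simp add: w_def R_def S_def)
  have R1: "1 \<le> R" unfolding R_def using len_le_sum[of rs] Node.prems by (cases rs) auto
  have w1: "1 \<le> w" using w_pos[OF Node.prems(1)] by (simp add: w_def)
  have Q0: "0 \<le> Q" unfolding Q_def by (induction cs) auto
  have B2: "2 \<le> real B + 1" using assms by simp
  have "sum_list (map (build_time B) cs) \<le>
      sum_list (map (\<lambda>c. \<alpha> * real (weight c) - \<gamma> * sqrt (real (weight c))) cs)"
    using Node by (intro sum_list_mono) (auto simp: list_all_iff \<alpha>_def \<gamma>_def K_def)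
  also have "\<dots> = \<alpha> * S - \<gamma> * Q"
    by (simp add: sum_list_diff_real sum_list_const_mult real_sum_list S_def Q_def)
  finally have ch: "sum_list (map (build_time B) cs) \<le> \<alpha> * S - \<gamma> * Q" .
  have "S \<le> sum_list (map (\<lambda>c. sqrt (real (weight c)) * sqrt (w/2)) cs)"
    unfolding S_def real_sum_list
  proof (intro sum_list_mono)
    fix c assume c: "c \<in> set cs"
    have wc: "real (weight c) \<le> w / (real B + 1)"
      using Node.prems c by (auto simp: list_all_iff w_def)
    also have "\<dots> \<le> w / 2" using B2 w1 by (intro divide_left_mono) auto
    finally have "sqrt (real (weight c)) \<le> sqrt (w/2)" by simp
    then have "sqrt (real (weight c)) * sqrt (real (weight c)) \<le> sqrt (real (weight c)) * sqrt (w/2)"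
      by (intro mult_left_mono) auto
    then show "real (weight c) \<le> sqrt (real (weight c)) * sqrt (w/2)" by simp
  qed
  also have "\<dots> = Q * sqrt (w/2)" by (simp add: Q_def sum_list_mult_const)
  finally have SQ: "S \<le> Q * sqrt (w/2)" .
  define s where "s = sqrt w"
  have s1: "1 \<le> s" using w1 by (simp add: s_def)
  have ss: "s * s = w" using w1 by (simp add: s_def)
  have nkw: "real (nkeys (Node rs cs)) \<le> w" using nk_le_w[OF Node.prems(1)] by (simp add: w_def)
  have nk1: "1 \<le> real (nkeys (Node rs cs))" using nk_pos[OF Node.prems(1)] by simp
  have lg: "1 + log 2 (real (nkeys (Node rs cs))) \<le> 4 * s"
  proof -
    have "log 2 (real (nkeys (Node rs cs))) \<le> log 2 w" using nk1 nkw by (subst log_le_cancel_iff) auto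
    then show ?thesis using log_sqrt[OF w1] by (simp add: s_def)
  qed
  have lg0: "0 \<le> 1 + log 2 (real (nkeys (Node rs cs)))" using nk1 by simp
  have lenB: "real (length rs) \<le> real B" using Node.prems by simp
  have "real (length rs) * (1 + log 2 (real (nkeys (Node rs cs)))) \<le> real B * (4 * s)"
    using lg lg0 lenB by (intro mult_mono) auto
  moreover have "real (B+1) \<le> real (B+1) * s" using s1 by simp
  ultimately have c0: "real (B + 1) + real (length rs) * (1 + log 2 (real (nkeys (Node rs cs)))) \<le> K * s"
    by (simp add: K_def algebra_simps)
  have K1: "1 \<le> K" by (simp add: K_def)
  have main: "K * s + \<gamma> * s \<le> \<alpha> * R + \<gamma> * Q"
  proof (cases "w \<le> 8 * R")
    case True
    have "s \<le> w" using s1 ss by (metis mult_le_cancel_left1 order_less_le_trans zero_less_one mult.commute le_less)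
    then have "6 * K * s \<le> 6 * K * w" using K1 by simp
    also have "\<dots> \<le> \<alpha> * R" using True K1 by (simp add: \<alpha>_def)
    finally have "6 * K * s \<le> \<alpha> * R" .
    moreover have "0 \<le> \<gamma> * Q" using Q0 K1 by (simp add: \<gamma>_def)
    ultimately show ?thesis by (simp add: \<gamma>_def)
  next
    case False
    define r where "r = sqrt (2::real)"
    have r: "1.4 \<le> r" "r * r = 2" "0 < r" using sqrt2_ge by (auto simp: r_def)
    have sw2: "sqrt (w/2) = s / r" by (simp add: s_def r_def real_sqrt_divide)
    have "7 * w < 8 * S" using False wRS by simp
    also have "8 * S \<le> 8 * (Q * (s / r))" using SQ sw2 by simp
    finally have h: "7 * w * r < 8 * Q * s" using r by (simp add: field_simps)
    have e: "7 * s * s * r = 7 * w * r" by (simp add: ss[symmetric] algebra_simps)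
    have "7 * s * s * r < 8 * Q * s" using h e by linarith
    then have "7 * s * r < 8 * Q" using s1 by (smt (verit) mult.commute mult.left_commute mult_le_cancel_left2 mult_less_cancel_left_pos)
    moreover have "7 * s * 1.4 \<le> 7 * s * r" using r s1 by simp
    ultimately have "7 * s * (14/10) < 8 * Q" by linarith
    then have "6 * s \<le> 5 * Q" using s1 by linarith
    then have "6 * K * s \<le> 5 * K * Q" using K1 by (metis mult.assoc mult.left_commute mult_le_cancel_left_pos less_le_trans zero_less_one)
    moreover have "0 \<le> \<alpha> * R" using R1 K1 by (simp add: \<alpha>_def)
    ultimately show ?thesis by (simp add: \<gamma>_def)
  qed
  have "build_time B (Node rs cs) \<le> K * s + (\<alpha> * S - \<gamma> * Q)"
    using c0 ch by simp
  also have "\<dots> \<le> \<alpha> * w - \<gamma> * s" using main wRS by (simp add: algebra_simps)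
  finally show ?case by (simp add: \<alpha>_def \<gamma>_def K_def w_def s_def)
qed


fun grp :: "real \<Rightarrow> (int \<times> nat) list \<Rightarrow> (int \<times> nat) list \<Rightarrow> (int \<times> nat) list list \<times> (int \<times> nat) list" where
  "grp t acc [] = ([acc], [])"
| "grp t acc (x # xs) = (if real (sum_list (map snd acc) + snd x) \<le> t then grp t (acc @ [x]) xs
     else (case grp t [] xs of (ps, rs) \<Rightarrow> (acc # ps, x # rs)))"

lemma grp_props:
  "grp t acc xs = (ps, rs) \<Longrightarrow> real (sum_list (map snd acc)) \<le> t \<Longrightarrow>
   length ps = Suc (length rs) \<and>
   concat (map (\<lambda>(p, r). p @ [r]) (zip ps rs)) @ last ps = acc @ xs \<and>
   (\<forall>p\<in>set ps. real (sum_list (map snd p)) \<le> t \<and> set p \<subseteq> set acc \<union> set xs) \<and>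
   set rs \<subseteq> set xs \<and>
   (rs = [] \<longrightarrow> real (sum_list (map snd (acc @ xs))) \<le> t) \<and>
   (rs \<noteq> [] \<longrightarrow> real (length rs) * t < real (sum_list (map snd (acc @ xs))))"
proof (induction t acc xs arbitrary: ps rs rule: grp.induct)
  case (1 t acc)
  then show ?case by auto
next
  case (2 t acc x xs)
  show ?case
  proof (cases "real (sum_list (map snd acc) + snd x) \<le> t")
    case True
    then have "grp t (acc @ [x]) xs = (ps, rs)" using 2 by simp
    from "2.IH"(1)[OF True this] True show ?thesis by auto
  next
    case False
    obtain ps' rs' where g: "grp t [] xs = (ps', rs')" by fastforce
    have eq: "ps = acc # ps'" "rs = x # rs'" using 2 False g by auto
    have t0: "0 \<le> t" using "2.prems"(2) by (meson of_nat_0_le_iff order_trans)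
    have IH: "length ps' = Suc (length rs') \<and>
      concat (map (\<lambda>(p, r). p @ [r]) (zip ps' rs')) @ last ps' = xs \<and>
      (\<forall>p\<in>set ps'. real (sum_list (map snd p)) \<le> t \<and> set p \<subseteq> set xs) \<and>
      set rs' \<subseteq> set xs \<and>
      (rs' = [] \<longrightarrow> real (sum_list (map snd xs)) \<le> t) \<and>
      (rs' \<noteq> [] \<longrightarrow> real (length rs') * t < real (sum_list (map snd xs)))"
      using "2.IH"(2)[OF False g] t0 by simp
    have ne: "ps' \<noteq> []" using IH by auto
    have c: "real (length rs) * t < real (sum_list (map snd (acc @ x # xs)))"
    proof (cases "rs' = []")
      case True then show ?thesis using False eq by simp
    next
      case f: False
      then have "real (length rs') * t < real (sum_list (map snd xs))" using IH by blast
      then show ?thesis using False eq by (simp add: algebra_simps)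
    qed
    show ?thesis using IH ne eq "2.prems"(2) c by auto
  qed
qed

lemma concat_sum:
  "length ps = Suc (length rs) \<Longrightarrow>
   sum_list (map (f::_\<Rightarrow>nat) (concat (map (\<lambda>(p, r). p @ [r]) (zip ps rs)) @ last ps))
   = sum_list (map (\<lambda>p. sum_list (map f p)) ps) + sum_list (map f rs)"
proof (induction rs arbitrary: ps)
  case Nil
  then obtain p where "ps = [p]" by (cases ps) auto
  then show ?case by simp
next
  case (Cons r rs)
  then obtain p ps' where ps: "ps = p # ps'" "length ps' = Suc (length rs)" by (cases ps) auto
  then have "ps' \<noteq> []" by auto
  then show ?case using Cons.IH[OF ps(2)] ps by (simp add: algebra_simps)
qed

lemma concat_len:
  "length ps = Suc (length rs) \<Longrightarrow>
   length (concat (map (\<lambda>(p, r). p @ [r]) (zip ps rs)) @ last ps)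
   = sum_list (map length ps) + length rs"
proof (induction rs arbitrary: ps)
  case Nil
  then obtain p where "ps = [p]" by (cases ps) auto
  then show ?case by simp
next
  case (Cons r rs)
  then obtain p ps' where ps: "ps = p # ps'" "length ps' = Suc (length rs)" by (cases ps) auto
  then have "ps' \<noteq> []" by auto
  then show ?case using Cons.IH[OF ps(2)] ps by (simp add: algebra_simps)
qed

lemma gsat_wn: "is_gsat D ks T \<Longrightarrow> weight T = sum_list (map snd ks) \<and> nkeys T = length ks"
proof (induction rule: is_gsat.induct)
  case (empty D) then show ?case by simp
next
  case (node rs D ks cs parts)
  have "map weight cs = map (\<lambda>p. sum_list (map snd p)) parts"
    using node by (intro nth_equalityI) auto
  moreover have "map nkeys cs = map length parts"
    using node by (intro nth_equalityI) auto
  ultimately show ?case using node(4,5) concat_sum[OF node(4), of snd] concat_len[OF node(4)]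
    by simp
qed


lemma build:
  assumes B1: "B \<ge> 1"
  shows "(\<forall>p\<in>set ks. 1 \<le> snd p) \<Longrightarrow>
    \<exists>T. is_gsat (\<lambda>_. real B) ks T \<and> ideal (\<lambda>_. real B) T \<and> good B T"
proof (induction ks rule: length_induct)
  case (1 ks)
  show ?case
  proof (cases "ks = []")
    case True
    then show ?thesis by (intro exI[of _ Leaf]) (auto intro: is_gsat.empty)
  next
    case False
    define P where "P = (\<lambda>ks T. is_gsat (\<lambda>_. real B) ks T \<and> ideal (\<lambda>_. real B) T \<and> good B T)"
    define m where "m = sum_list (map snd ks)"
    define t where "t = real m / (real B + 1)"
    obtain ps rs where g: "grp t [] ks = (ps, rs)" by fastforce
    have lm: "length ks \<le> m" using len_le_sum "1.prems" by (simp add: m_def)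
    have m1: "1 \<le> m" using lm False by (cases ks) auto
    have t0: "0 \<le> t" by (simp add: t_def)
    have G: "length ps = Suc (length rs) \<and>
      concat (map (\<lambda>(p, r). p @ [r]) (zip ps rs)) @ last ps = ks \<and>
      (\<forall>p\<in>set ps. real (sum_list (map snd p)) \<le> t \<and> set p \<subseteq> set ks) \<and>
      set rs \<subseteq> set ks \<and>
      (rs = [] \<longrightarrow> real m \<le> t) \<and>
      (rs \<noteq> [] \<longrightarrow> real (length rs) * t < real m)"
      using grp_props[OF g] t0 by (simp add: m_def)
    have tm: "t < real m" using m1 B1 by (simp add: t_def field_simps)
    have rsne: "rs \<noteq> []" using G tm by auto
    have "real (length rs) * t < real m" using G rsne by blast
    then have "real (length rs) * real m < real m * (real B + 1)" by (simp add: t_def field_simps)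
    then have "real (length rs) < real B + 1" using m1 by (simp add: mult.commute)
    then have lenB: "length rs \<le> B" by linarith
    have lenks: "length ks = sum_list (map length ps) + length rs"
      using concat_len[of ps rs] G by simp
    have IH: "\<forall>p\<in>set ps. \<exists>T. P p T"
    proof
      fix p assume p: "p \<in> set ps"
      have "length p \<le> sum_list (map length ps)" using p by (intro member_le_sum_list) auto
      then have "length p < length ks" using lenks rsne by (cases rs) auto
      moreover have "\<forall>q\<in>set p. 1 \<le> snd q" using G p "1.prems" by blast
      ultimately show "\<exists>T. P p T" using "1.IH" by (simp add: P_def)
    qed
    define cs where "cs = map (\<lambda>p. SOME T. P p T) ps"
    have ch: "\<forall>p\<in>set ps. P p (SOME T. P p T)" using IH by (auto intro: someI_ex)
    have gs: "is_gsat (\<lambda>_. real B) ks (Node rs cs)"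
    proof (rule is_gsat.node[where parts = ps])
      show "rs \<noteq> []" by (rule rsne)
      show "real (length rs) \<le> real_of_int \<lceil>real B\<rceil>" using lenB by simp
      show "length cs = Suc (length rs)" using G by (simp add: cs_def)
      show "length ps = Suc (length rs)" using G by simp
      show "ks = concat (map (\<lambda>(p, r). p @ [r]) (zip ps rs)) @ last ps" using G by simp
      show "\<forall>j<length cs. is_gsat (\<lambda>_. real B) (ps ! j) (cs ! j)"
        using ch by (auto simp: cs_def P_def)
    qed
    have wN: "weight (Node rs cs) = m" using gsat_wn[OF gs] by (simp add: m_def)
    have cprop: "\<forall>c\<in>set cs. P (SOME p. False) c \<or> True" by simp
    have cs_ok: "\<forall>c\<in>set cs. \<exists>p\<in>set ps. c = (SOME T. P p T)" by (auto simp: cs_def)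
    have id: "ideal (\<lambda>_. real B) (Node rs cs)"
    proof -
      have "\<forall>c\<in>set cs. real (weight c) \<le> real m / (real B + 1) \<and> ideal (\<lambda>_. real B) c"
      proof
        fix c assume "c \<in> set cs"
        then obtain p where p: "p \<in> set ps" and c: "c = (SOME T. P p T)" using cs_ok by blast
        have Pc: "P p c" using ch p c by simp
        then have "weight c = sum_list (map snd p)" using gsat_wn by (auto simp: P_def)
        then show "real (weight c) \<le> real m / (real B + 1) \<and> ideal (\<lambda>_. real B) c"
          using G p Pc by (auto simp: t_def P_def)
      qed
      then show ?thesis using wN by (simp add: list_all_iff)
    qed
    have gd: "good B (Node rs cs)"
    proof -
      have "\<forall>c\<in>set cs. good B c"
      proof
        fix c assume "c \<in> set cs"
        then obtain p where p: "p \<in> set ps" and c: "c = (SOME T. P p T)" using cs_ok by blast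
        then show "good B c" using ch by (auto simp: P_def)
      qed
      moreover have "\<forall>r\<in>set rs. 1 \<le> snd r" using G "1.prems" by blast
      ultimately show ?thesis using rsne lenB by (simp add: list_all_iff)
    qed
    show ?thesis using gs id gd by blast
  qed
qed


theorem theorem7:
  fixes B :: nat
  assumes "B \<ge> 1"
  shows "\<exists>C > 0. \<forall>ks :: (int \<times> nat) list.
           ks \<noteq> [] \<and> sorted_wrt (\<lambda>a b. fst a < fst b) ks \<and> (\<forall>p \<in> set ks. snd p \<ge> 1) \<longrightarrow>
           (let n = length ks; m = sum_list (map snd ks) in
            \<exists>T. is_sabt B ks T \<and> ideal_sabt B T
              \<and> build_time B T \<le> C * min (real n * (1 + log 2 (real n))) (real m)
              \<and> build_mem B T \<le> C * real n
              \<and> real (depth T) \<le> C * (1 + log (real B + 1) (real m)))"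
proof (intro exI[of _ "48 * real (5*B+1) + real B + 2"] conjI allI impI)
  define C where "C = 48 * real (5*B+1) + real B + 2"
  show "0 < 48 * real (5*B+1) + real B + 2" by simp
  fix ks :: "(int \<times> nat) list"
  assume H: "ks \<noteq> [] \<and> sorted_wrt (\<lambda>a b. fst a < fst b) ks \<and> (\<forall>p \<in> set ks. snd p \<ge> 1)"
  obtain T where T: "is_gsat (\<lambda>_. real B) ks T" "ideal (\<lambda>_. real B) T" "good B T"
    using build[OF assms, of ks] H by blast
  define n where "n = length ks"
  define m where "m = sum_list (map snd ks)"
  have nT: "nkeys T = n" and mT: "weight T = m" using gsat_wn[OF T(1)] by (auto simp: n_def m_def)
  have TL: "T \<noteq> Leaf" using T(1) H by (cases T) (auto elim: is_gsat.cases)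
  have n1: "1 \<le> n" using H by (simp add: n_def Suc_le_eq)
  have m1: "1 \<le> m" using w_pos[OF T(3) TL] mT by simp
  have C1: "real B + 2 \<le> C" "real (B+1) \<le> C" "48 * real (5*B+1) \<le> C" "1 \<le> C" by (auto simp: C_def)
  have ln0: "0 \<le> log 2 (real n)" using n1 by simp
  have "build_time B T \<le> real n * (real B + 2 + log 2 (real n))"
    using time_nlogn[OF T(3), of n] nT by simp
  also have "\<dots> \<le> real n * ((real B + 2) * (1 + log 2 (real n)))"
    using ln0 by (intro mult_left_mono) (auto simp: algebra_simps)
  also have "\<dots> = (real B + 2) * (real n * (1 + log 2 (real n)))" by simp
  also have "\<dots> \<le> C * (real n * (1 + log 2 (real n)))"
    using C1 ln0 by (intro mult_right_mono) auto
  finally have t1: "build_time B T \<le> C * (real n * (1 + log 2 (real n)))" .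
  have "build_time B T \<le> 48 * real (5*B+1) * real m - 5 * real (5*B+1) * sqrt (real m)"
    using time_lin[OF assms T(3) T(2)] mT by simp
  also have "\<dots> \<le> 48 * real (5*B+1) * real m" by simp
  also have "\<dots> \<le> C * real m" using C1 by (intro mult_right_mono) auto
  finally have t2: "build_time B T \<le> C * real m" .
  have tm: "build_time B T \<le> C * min (real n * (1 + log 2 (real n))) (real m)"
    using t1 t2 by (simp add: min_def)
  have "build_mem B T \<le> real (B+1) * real n" using mem_bound[OF T(3)] nT by simp
  also have "\<dots> \<le> C * real n" using C1 by (intro mult_right_mono) auto
  finally have mm: "build_mem B T \<le> C * real n" .
  have lm0: "0 \<le> log (real B + 1) (real m)" using m1 assms by simp
  have "real (depth T) \<le> 1 + log (real B + 1) (real m)"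
    using depth_bound[OF assms T(3) T(2) TL] mT by simp
  also have "\<dots> \<le> C * (1 + log (real B + 1) (real m))"
    using C1 lm0 by (metis mult_le_cancel_right1 add_nonneg_nonneg zero_le_one not_le order_trans)
  finally have dd: "real (depth T) \<le> C * (1 + log (real B + 1) (real m))" .
  show "let n = length ks; m = sum_list (map snd ks) in
            \<exists>T. is_sabt B ks T \<and> ideal_sabt B T
              \<and> build_time B T \<le> (48 * real (5*B+1) + real B + 2) * min (real n * (1 + log 2 (real n))) (real m)
              \<and> build_mem B T \<le> (48 * real (5*B+1) + real B + 2) * real n
              \<and> real (depth T) \<le> (48 * real (5*B+1) + real B + 2) * (1 + log (real B + 1) (real m))"
    unfolding Let_def C_def[symmetric] n_def[symmetric] m_def[symmetric]
    using T tm mm dd by (auto simp: is_sabt_def ideal_sabt_def)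
qed

end
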